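(* Consider a Markov decision process with continuous state space $\mathcal{S}$, continuous action space $\mathcal{A}$, transition density $p(\mathbf{s}'|\mathbf{s},\mathbf{a})$ and discount factor $\gamma\in(0,1)$, and let $r_1,r_2$ be bounded reward functions with optimal soft Q-functions (temperature $1$) $Q_1^*, Q_2^*$ and optimal soft policies $\pi_i^*(\mathbf{a}|\mathbf{s})\propto\exp(Q_i^*(\mathbf{s},\mathbf{a}))$. Let $Q_\Sigma=\frac12(Q_1^*+Q_2^* )$, $r_\mathcal{C}=\frac12(r_1+r_2)$, let $Q_\mathcal{C}^*$ be the optimal soft Q-function for $r_\mathcal{C}$, and let $C^*$ be the fixed point of $$C(\mathbf{s},\mathbf{a}) \leftarrow \gamma\, \mathbb{E}_{\mathbf{s}'\sim p(\mathbf{s}'|\mathbf{s},\mathbf{a})}\Big[ D_{1/2}\big(\pi_1^*(\cdot|\mathbf{s}')\,\|\,\pi_2^*(\cdot|\mathbf{s}')\big) + \max_{\mathbf{a}'\in\mathcal{A}} C(\mathbf{s}',\mathbf{a}')\Big].$$ Define $V_\Sigma(\mathbf{s}) = \log\int_{\mathcal{A}}\exp(Q_\Sigma(\mathbf{s},\mathbf{a}))\,d\mathbf{a}$ and $V_\mathcal{C}^*(\mathbf{s}) = \log\int_{\mathcal{A}}\exp(Q_\mathcal{C}^*(\mathbf{s},\mathbf{a}))\,d\mathbf{a}$. Then for all $\mathbf{s}\in\mathcal{S}$, $$V_\Sigma(\mathbf{s}) \ge V_\mathcal{C}^*(\mathbf{s}) \ge V_\Sigma(\mathbf{s}) - \max_{\mathbf{a}}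 C^*(\mathbf{s},\mathbf{a}).$$
   Context: Soft (maximum-entropy) reinforcement learning with temperature $1$: for a bounded reward $r$, the soft Bellman backup maps a bounded $Q$ to $r(\mathbf{s},\mathbf{a}) + \gamma\,\mathbb{E}_{\mathbf{s}'\sim p(\cdot|\mathbf{s},\mathbf{a})}[\log\int_{\mathcal{A}}\exp(Q(\mathbf{s}',\mathbf{a}'))\,d\mathbf{a}']$; the optimal soft Q-function for $r$ is its unique fixed point, and the optimal soft policy is proportional to $\exp$ of it. $D_{1/2}(p\|q) = -2\log\int\sqrt{p q}$ is the Rényi divergence of order $1/2$. *)

theory Defs
  imports "HOL-Analysis.Analysis"
begin

text \<open>States live in a measure space SM, actions in a measure space AM
  (the base measure "d a" of the action integrals); the transition
  p s a s' is a probability density w.r.t. SM.\<close>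

definition soft_V :: "'a measure \<Rightarrow> ('s \<Rightarrow> 'a \<Rightarrow> real) \<Rightarrow> 's \<Rightarrow> real" where
  "soft_V AM Q s = ln (\<integral>a. exp (Q s a) \<partial>AM)"

definition trans_exp ::
  "'s measure \<Rightarrow> ('s \<Rightarrow> 'a \<Rightarrow> 's \<Rightarrow> real) \<Rightarrow> 's \<Rightarrow> 'a \<Rightarrow> ('s \<Rightarrow> real) \<Rightarrow> real" where
  "trans_exp SM p s a f = (\<integral>s'. p s a s' * f s' \<partial>SM)"

definition transition_density ::
  "'s measure \<Rightarrow> 'a measure \<Rightarrow> ('s \<Rightarrow> 'a \<Rightarrow> 's \<Rightarrow> real) \<Rightarrow> bool" where
  "transition_density SM AM p \<longleftrightarrow>
     (\<forall>s\<in>space SM. \<forall>a\<in>space AM.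
        p s a \<in> borel_measurable SM \<and> (\<forall>s'\<in>space SM. 0 \<le> p s a s') \<and>
        integrable SM (p s a) \<and> (\<integral>s'. p s a s' \<partial>SM) = 1)"

definition bounded_fun2 :: "('s \<Rightarrow> 'a \<Rightarrow> real) \<Rightarrow> 's set \<Rightarrow> 'a set \<Rightarrow> bool" where
  "bounded_fun2 f S A \<longleftrightarrow> (\<exists>B. \<forall>s\<in>S. \<forall>a\<in>A. \<bar>f s a\<bar> \<le> B)"

definition soft_backup ::
  "'s measure \<Rightarrow> 'a measure \<Rightarrow> ('s \<Rightarrow> 'a \<Rightarrow> 's \<Rightarrow> real) \<Rightarrow> real \<Rightarrow>
   ('s \<Rightarrow> 'a \<Rightarrow> real) \<Rightarrow> ('s \<Rightarrow> 'a \<Rightarrow> real) \<Rightarrow> 's \<Rightarrow> 'a \<Rightarrow> real" where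
  "soft_backup SM AM p \<gamma> r Q s a = r s a + \<gamma> * trans_exp SM p s a (soft_V AM Q)"

text \<open>Optimal soft Q-function for reward r: the (unique) bounded fixed point of
  the soft Bellman backup (measurable, so that all integrals are meaningful).\<close>
definition optimal_soft_Q ::
  "'s measure \<Rightarrow> 'a measure \<Rightarrow> ('s \<Rightarrow> 'a \<Rightarrow> 's \<Rightarrow> real) \<Rightarrow> real \<Rightarrow>
   ('s \<Rightarrow> 'a \<Rightarrow> real) \<Rightarrow> ('s \<Rightarrow> 'a \<Rightarrow> real) \<Rightarrow> bool" where
  "optimal_soft_Q SM AM p \<gamma> r Q \<longleftrightarrow>
     bounded_fun2 Q (space SM) (space AM) \<and>
     (\<lambda>(s, a). Q s a) \<in> borel_measurable (SM \<Otimes>\<^sub>M AM) \<and>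
     (\<forall>s\<in>space SM. \<forall>a\<in>space AM. Q s a = soft_backup SM AM p \<gamma> r Q s a)"

definition soft_policy :: "'a measure \<Rightarrow> ('s \<Rightarrow> 'a \<Rightarrow> real) \<Rightarrow> 's \<Rightarrow> 'a \<Rightarrow> real" where
  "soft_policy AM Q s a = exp (Q s a) / (\<integral>a'. exp (Q s a') \<partial>AM)"

definition renyi_half :: "'a measure \<Rightarrow> ('a \<Rightarrow> real) \<Rightarrow> ('a \<Rightarrow> real) \<Rightarrow> real" where
  "renyi_half AM P R = - 2 * ln (\<integral>a. sqrt (P a * R a) \<partial>AM)"

definition C_backup ::
  "'s measure \<Rightarrow> 'a measure \<Rightarrow> ('s \<Rightarrow> 'a \<Rightarrow> 's \<Rightarrow> real) \<Rightarrow> real \<Rightarrow>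
   ('s \<Rightarrow> 'a \<Rightarrow> real) \<Rightarrow> ('s \<Rightarrow> 'a \<Rightarrow> real) \<Rightarrow> ('s \<Rightarrow> 'a \<Rightarrow> real) \<Rightarrow> 's \<Rightarrow> 'a \<Rightarrow> real" where
  "C_backup SM AM p \<gamma> Q1 Q2 C s a =
     \<gamma> * trans_exp SM p s a
       (\<lambda>s'. renyi_half AM (soft_policy AM Q1 s') (soft_policy AM Q2 s')
             + (SUP a'\<in>space AM. C s' a'))"

end

theory Submission imports Defs begin

lemma Z_int:
  assumes fin: "emeasure AM (space AM) < \<infinity>"
    and meas: "(\<lambda>(s, a). Q s a) \<in> borel_measurable (SM \<Otimes>\<^sub>M AM)"
    and bnd: "bounded_fun2 Q (space SM) (space AM)"
    and s: "s \<in> space SM"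
  shows "integrable AM (\<lambda>a. exp (Q s a))"
proof -
  interpret finite_measure AM using fin by (intro finite_measureI) auto
  obtain B where B: "\<forall>s\<in>space SM. \<forall>a\<in>space AM. \<bar>Q s a\<bar> \<le> B"
    using bnd unfolding bounded_fun2_def by auto
  have m: "(\<lambda>a. Q s a) \<in> borel_measurable AM"
    using measurable_Pair2[OF meas s] by simp
  show ?thesis
  proof (rule integrable_const_bound[where B="exp B"])
    show "AE x in AM. norm (exp (Q s x)) \<le> exp B"
      using B s by (intro AE_I2) (auto simp: abs_le_iff)
    show "(\<lambda>a. exp (Q s a)) \<in> borel_measurable AM" using m by measurable
  qed
qed

lemma Z_bounds:
  assumes fin: "emeasure AM (space AM) < \<infinity>"
    and meas: "(\<lambda>(s, a). Q s a) \<in> borel_measurable (SM \<Otimes>\<^sub>M AM)"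
    and B: "\<forall>s\<in>space SM. \<forall>a\<in>space AM. \<bar>Q s a\<bar> \<le> B"
    and s: "s \<in> space SM"
  shows "exp (-B) * measure AM (space AM) \<le> (\<integral>a. exp (Q s a) \<partial>AM)"
    "(\<integral>a. exp (Q s a) \<partial>AM) \<le> exp B * measure AM (space AM)"
proof -
  interpret finite_measure AM using fin by (intro finite_measureI) auto
  have i: "integrable AM (\<lambda>a. exp (Q s a))"
    using Z_int[OF fin meas _ s] B unfolding bounded_fun2_def by blast
  have "(\<integral>a. exp (-B) \<partial>AM) \<le> (\<integral>a. exp (Q s a) \<partial>AM)"
    using B s i by (intro integral_mono) (force simp: abs_le_iff)+
  then show "exp (-B) * measure AM (space AM) \<le> (\<integral>a. exp (Q s a) \<partial>AM)" by (simp add: mult.commute)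
  have "(\<integral>a. exp (Q s a) \<partial>AM) \<le> (\<integral>a. exp B \<partial>AM)"
    using B s i by (intro integral_mono) (auto simp: abs_le_iff)
  then show "(\<integral>a. exp (Q s a) \<partial>AM) \<le> exp B * measure AM (space AM)" by (simp add: mult.commute)
qed

lemma mu_pos:
  assumes pos: "0 < emeasure AM (space AM)" and fin: "emeasure AM (space AM) < \<infinity>"
  shows "0 < measure AM (space AM)"
proof -
  interpret finite_measure AM using fin by (intro finite_measureI) auto
  show ?thesis using pos by (simp add: emeasure_eq_measure)
qed

lemma Z_pos:
  assumes pos: "0 < emeasure AM (space AM)" and fin: "emeasure AM (space AM) < \<infinity>"
    and meas: "(\<lambda>(s, a). Q s a) \<in> borel_measurable (SM \<Otimes>\<^sub>M AM)"
    and bnd: "bounded_fun2 Q (space SM) (space AM)"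
    and s: "s \<in> space SM"
  shows "0 < (\<integral>a. exp (Q s a) \<partial>AM)"
proof -
  obtain B where B: "\<forall>s\<in>space SM. \<forall>a\<in>space AM. \<bar>Q s a\<bar> \<le> B"
    using bnd unfolding bounded_fun2_def by auto
  have "0 < measure AM (space AM)" by (rule mu_pos[OF pos fin])
  then have "0 < exp (-B) * measure AM (space AM)" by simp
  also have "\<dots> \<le> (\<integral>a. exp (Q s a) \<partial>AM)" by (rule Z_bounds(1)[OF fin meas B s])
  finally show ?thesis .
qed

lemma V_bounded:
  assumes pos: "0 < emeasure AM (space AM)" and fin: "emeasure AM (space AM) < \<infinity>"
    and meas: "(\<lambda>(s, a). Q s a) \<in> borel_measurable (SM \<Otimes>\<^sub>M AM)"
    and bnd: "bounded_fun2 Q (space SM) (space AM)"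
  shows "\<exists>K. \<forall>s\<in>space SM. \<bar>soft_V AM Q s\<bar> \<le> K"
proof -
  obtain B where B: "\<forall>s\<in>space SM. \<forall>a\<in>space AM. \<bar>Q s a\<bar> \<le> B"
    using bnd unfolding bounded_fun2_def by auto
  define \<mu> where "\<mu> = measure AM (space AM)"
  have mu: "0 < \<mu>" unfolding \<mu>_def by (rule mu_pos[OF pos fin])
  show ?thesis
  proof (intro exI ballI)
    fix s assume s: "s \<in> space SM"
    have l: "exp (-B) * \<mu> \<le> (\<integral>a. exp (Q s a) \<partial>AM)" and u: "(\<integral>a. exp (Q s a) \<partial>AM) \<le> exp B * \<mu>"
      using Z_bounds[OF fin meas B s] unfolding \<mu>_def by auto
    have p0: "0 < exp (-B) * \<mu>" using mu by simp
    have "ln (exp (-B) * \<mu>) \<le> soft_V AM Q s"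
      unfolding soft_V_def using l p0 by (subst ln_le_cancel_iff) auto
    moreover have "soft_V AM Q s \<le> ln (exp B * \<mu>)"
      unfolding soft_V_def using u p0 l by (subst ln_le_cancel_iff) auto
    ultimately show "\<bar>soft_V AM Q s\<bar> \<le> \<bar>B\<bar> + \<bar>ln \<mu>\<bar>"
      using mu by (simp add: ln_mult)
  qed
qed

lemma V_meas:
  assumes fin: "emeasure AM (space AM) < \<infinity>"
    and meas: "(\<lambda>(s, a). Q s a) \<in> borel_measurable (SM \<Otimes>\<^sub>M AM)"
  shows "soft_V AM Q \<in> borel_measurable SM"
proof -
  interpret finite_measure AM using fin by (intro finite_measureI) auto
  have "(\<lambda>s. \<integral>a. exp (Q s a) \<partial>AM) \<in> borel_measurable SM"
    by (rule borel_measurable_lebesgue_integral) (use meas in measurable)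
  then show ?thesis unfolding soft_V_def[abs_def] by measurable
qed

lemma V_shift:
  assumes pos: "0 < emeasure AM (space AM)" and fin: "emeasure AM (space AM) < \<infinity>"
    and meas: "(\<lambda>(s, a). Q s a) \<in> borel_measurable (SM \<Otimes>\<^sub>M AM)"
    and bnd: "bounded_fun2 Q (space SM) (space AM)"
    and meas': "(\<lambda>(s, a). Q' s a) \<in> borel_measurable (SM \<Otimes>\<^sub>M AM)"
    and bnd': "bounded_fun2 Q' (space SM) (space AM)"
    and s: "s \<in> space SM"
    and le: "\<forall>a\<in>space AM. Q' s a \<le> Q s a + c"
  shows "soft_V AM Q' s \<le> soft_V AM Q s + c"
proof -
  have i: "integrable AM (\<lambda>a. exp (Q s a))" by (rule Z_int[OF fin meas bnd s])
  have i': "integrable AM (\<lambda>a. exp (Q' s a))" by (rule Z_int[OF fin meas' bnd' s])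
  have z: "0 < (\<integral>a. exp (Q s a) \<partial>AM)" by (rule Z_pos[OF pos fin meas bnd s])
  have z': "0 < (\<integral>a. exp (Q' s a) \<partial>AM)" by (rule Z_pos[OF pos fin meas' bnd' s])
  have ic: "integrable AM (\<lambda>a. exp c * exp (Q s a))" using i by simp
  have "(\<integral>a. exp (Q' s a) \<partial>AM) \<le> (\<integral>a. exp c * exp (Q s a) \<partial>AM)"
  proof (rule integral_mono[OF i' ic])
    fix a assume "a \<in> space AM"
    then have "Q' s a \<le> c + Q s a" using le by auto
    then show "exp (Q' s a) \<le> exp c * exp (Q s a)" by (simp add: exp_add[symmetric])
  qed
  also have "\<dots> = exp c * (\<integral>a. exp (Q s a) \<partial>AM)" by simp
  finally have "ln (\<integral>a. exp (Q' s a) \<partial>AM) \<le> ln (exp c * (\<integral>a. exp (Q s a) \<partial>AM))"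
    using z z' by (subst ln_le_cancel_iff) auto
  then show ?thesis unfolding soft_V_def using z by (simp add: ln_mult)
qed


lemma ln_sqrt2: "0 < x \<Longrightarrow> ln (sqrt x) = ln x / 2"
proof -
  assume x: "0 < x"
  have "ln x = ln (sqrt x * sqrt x)" using x by simp
  also have "\<dots> = 2 * ln (sqrt x)" using x by (subst ln_mult) auto
  finally show ?thesis by simp
qed

lemma renyi_id:
  fixes Q1 Q2 :: "'s \<Rightarrow> 'a \<Rightarrow> real"
  assumes i1: "integrable AM (\<lambda>a. exp (Q1 s a))"
    and i2: "integrable AM (\<lambda>a. exp (Q2 s a))"
    and iS: "integrable AM (\<lambda>a. exp ((Q1 s a + Q2 s a) / 2))"
    and z1: "0 < (\<integral>a. exp (Q1 s a) \<partial>AM)"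
    and z2: "0 < (\<integral>a. exp (Q2 s a) \<partial>AM)"
    and zS: "0 < (\<integral>a. exp ((Q1 s a + Q2 s a) / 2) \<partial>AM)"
  shows "renyi_half AM (soft_policy AM Q1 s) (soft_policy AM Q2 s)
          = soft_V AM Q1 s + soft_V AM Q2 s - 2 * soft_V AM (\<lambda>s a. (Q1 s a + Q2 s a) / 2) s"
    and "0 \<le> renyi_half AM (soft_policy AM Q1 s) (soft_policy AM Q2 s)"
proof -
  define Z1 where "Z1 = (\<integral>a. exp (Q1 s a) \<partial>AM)"
  define Z2 where "Z2 = (\<integral>a. exp (Q2 s a) \<partial>AM)"
  define ZS where "ZS = (\<integral>a. exp ((Q1 s a + Q2 s a) / 2) \<partial>AM)"
  have Z1: "0 < Z1" and Z2: "0 < Z2" and ZS: "0 < ZS" using z1 z2 zS by (auto simp: Z1_def Z2_def ZS_def)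
  have pt: "sqrt (soft_policy AM Q1 s a * soft_policy AM Q2 s a)
      = exp ((Q1 s a + Q2 s a) / 2) / sqrt (Z1 * Z2)" for a
  proof (rule real_sqrt_unique)
    have "(exp ((Q1 s a + Q2 s a) / 2))\<^sup>2 = exp (Q1 s a) * exp (Q2 s a)"
      by (simp add: power2_eq_square exp_add[symmetric])
    then show "(exp ((Q1 s a + Q2 s a) / 2) / sqrt (Z1 * Z2))\<^sup>2
        = soft_policy AM Q1 s a * soft_policy AM Q2 s a"
      using Z1 Z2 by (simp add: soft_policy_def power_divide Z1_def Z2_def)
  qed (use Z1 Z2 in auto)
  have I: "(\<integral>a. sqrt (soft_policy AM Q1 s a * soft_policy AM Q2 s a) \<partial>AM) = ZS / sqrt (Z1 * Z2)"
    by (simp only: pt ZS_def) simp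
  show eq: "renyi_half AM (soft_policy AM Q1 s) (soft_policy AM Q2 s)
          = soft_V AM Q1 s + soft_V AM Q2 s - 2 * soft_V AM (\<lambda>s a. (Q1 s a + Q2 s a) / 2) s"
    unfolding renyi_half_def I soft_V_def Z1_def[symmetric] Z2_def[symmetric] ZS_def[symmetric]
    using Z1 Z2 ZS by (simp add: ln_divide_pos ln_sqrt2 ln_mult)
  have ip1: "integrable AM (soft_policy AM Q1 s)" unfolding soft_policy_def using i1 by simp
  have ip2: "integrable AM (soft_policy AM Q2 s)" unfolding soft_policy_def using i2 by simp
  have "ZS / sqrt (Z1 * Z2) \<le> (\<integral>a. (soft_policy AM Q1 s a + soft_policy AM Q2 s a) / 2 \<partial>AM)"
    unfolding I[symmetric]
  proof (rule integral_mono)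
    show "integrable AM (\<lambda>a. sqrt (soft_policy AM Q1 s a * soft_policy AM Q2 s a))"
      unfolding pt using iS by simp
    show "integrable AM (\<lambda>a. (soft_policy AM Q1 s a + soft_policy AM Q2 s a) / 2)"
      using ip1 ip2 by simp
    show "sqrt (soft_policy AM Q1 s a * soft_policy AM Q2 s a) \<le> (soft_policy AM Q1 s a + soft_policy AM Q2 s a) / 2" for a
      by (rule arith_geo_mean_sqrt) (use Z1 Z2 in \<open>auto simp: soft_policy_def Z1_def Z2_def\<close>)
  qed
  also have "\<dots> = ((\<integral>a. soft_policy AM Q1 s a \<partial>AM) + (\<integral>a. soft_policy AM Q2 s a \<partial>AM)) / 2"
    using ip1 ip2 by simp
  also have "\<dots> = 1" using Z1 Z2 unfolding soft_policy_def Z1_def Z2_def by simp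
  finally have le1: "ZS / sqrt (Z1 * Z2) \<le> 1" .
  have "ln (ZS / sqrt (Z1 * Z2)) \<le> 0" using le1 Z1 Z2 ZS by simp
  then show "0 \<le> renyi_half AM (soft_policy AM Q1 s) (soft_policy AM Q2 s)"
    unfolding renyi_half_def I by simp
qed


definition bmf :: "'s measure \<Rightarrow> ('s \<Rightarrow> real) \<Rightarrow> bool" where
  "bmf SM f \<longleftrightarrow> f \<in> borel_measurable SM \<and> (\<exists>B. \<forall>x\<in>space SM. \<bar>f x\<bar> \<le> B)"

lemma bmf_add: "bmf SM f \<Longrightarrow> bmf SM g \<Longrightarrow> bmf SM (\<lambda>x. f x + g x)"
  unfolding bmf_def
proof (elim conjE exE, intro conjI)
  fix B1 B2 assume "\<forall>x\<in>space SM. \<bar>f x\<bar> \<le> B1" "\<forall>x\<in>space SM. \<bar>g x\<bar> \<le> B2"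
  then show "\<exists>B. \<forall>x\<in>space SM. \<bar>f x + g x\<bar> \<le> B"
    by (intro exI[of _ "B1 + B2"]) (auto intro: order.trans[OF abs_triangle_ineq] add_mono)
qed auto

lemma bmf_const: "bmf SM (\<lambda>x. c)"
  unfolding bmf_def by auto

lemma bmf_cmult: "bmf SM f \<Longrightarrow> bmf SM (\<lambda>x. c * f x)"
  unfolding bmf_def
proof (elim conjE exE, intro conjI)
  fix B assume "\<forall>x\<in>space SM. \<bar>f x\<bar> \<le> B"
  then show "\<exists>B. \<forall>x\<in>space SM. \<bar>c * f x\<bar> \<le> B"
    by (intro exI[of _ "\<bar>c\<bar> * B"]) (auto simp: abs_mult intro: mult_left_mono)
qed auto

lemma E_int:
  assumes p: "transition_density SM AM p" and s: "s \<in> space SM" and a: "a \<in> space AM"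
    and f: "bmf SM f"
  shows "integrable SM (\<lambda>s'. p s a s' * f s')"
proof -
  obtain B where B: "\<forall>x\<in>space SM. \<bar>f x\<bar> \<le> B" and fm: "f \<in> borel_measurable SM"
    using f unfolding bmf_def by auto
  have pm: "p s a \<in> borel_measurable SM" and p0: "\<forall>x\<in>space SM. 0 \<le> p s a x"
    and pi: "integrable SM (p s a)"
    using p s a unfolding transition_density_def by auto
  show ?thesis
  proof (rule Bochner_Integration.integrable_bound)
    show "integrable SM (\<lambda>x. B * p s a x)" using pi by simp
    show "(\<lambda>s'. p s a s' * f s') \<in> borel_measurable SM" using pm fm by measurable
    show "AE x in SM. norm (p s a x * f x) \<le> norm (B * p s a x)"
    proof (rule AE_I2)
      fix x assume x: "x \<in> space SM"
      have "\<bar>p s a x * f x\<bar> = p s a x * \<bar>f x\<bar>" using p0 x by (simp add: abs_mult)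
      also have "\<dots> \<le> p s a x * B" using p0 x B by (intro mult_left_mono) auto
      also have "\<dots> \<le> \<bar>B * p s a x\<bar>" by (simp add: mult.commute)
      finally show "norm (p s a x * f x) \<le> norm (B * p s a x)" by simp
    qed
  qed
qed

lemma E_mono:
  assumes p: "transition_density SM AM p" and s: "s \<in> space SM" and a: "a \<in> space AM"
    and f: "bmf SM f" and g: "bmf SM g" and le: "\<forall>x\<in>space SM. f x \<le> g x"
  shows "trans_exp SM p s a f \<le> trans_exp SM p s a g"
  unfolding trans_exp_def
proof (rule integral_mono[OF E_int[OF p s a f] E_int[OF p s a g]])
  fix x assume x: "x \<in> space SM"
  have "0 \<le> p s a x" using p s a x unfolding transition_density_def by auto
  then show "p s a x * f x \<le> p s a x * g x" using le x by (intro mult_left_mono) auto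
qed

lemma E_add:
  assumes p: "transition_density SM AM p" and s: "s \<in> space SM" and a: "a \<in> space AM"
    and f: "bmf SM f" and g: "bmf SM g"
  shows "trans_exp SM p s a (\<lambda>x. f x + g x) = trans_exp SM p s a f + trans_exp SM p s a g"
  unfolding trans_exp_def
  using Bochner_Integration.integral_add[OF E_int[OF p s a f] E_int[OF p s a g]]
  by (simp add: distrib_left)

lemma E_cmult:
  shows "trans_exp SM p s a (\<lambda>x. c * f x) = c * trans_exp SM p s a f"
  unfolding trans_exp_def by (simp add: mult.left_commute)

lemma E_const:
  assumes p: "transition_density SM AM p" and s: "s \<in> space SM" and a: "a \<in> space AM"
  shows "trans_exp SM p s a (\<lambda>x. c) = c"
proof -
  have "(\<integral>s'. p s a s' \<partial>SM) = 1" using p s a unfolding transition_density_def by auto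
  then show ?thesis unfolding trans_exp_def by simp
qed

lemma E_cong:
  assumes "\<forall>x\<in>space SM. f x = g x"
  shows "trans_exp SM p s a f = trans_exp SM p s a g"
  unfolding trans_exp_def using assms by (intro Bochner_Integration.integral_cong) auto

lemma bmf_cong: "bmf SM f \<Longrightarrow> \<forall>x\<in>space SM. f x = g x \<Longrightarrow> bmf SM g"
  unfolding bmf_def by (metis measurable_cong)

lemma contraction:
  fixes f :: "'x \<Rightarrow> real"
  assumes ne: "X \<noteq> {}" and bdd: "\<exists>B. \<forall>x\<in>X. f x \<le> B" and g: "\<gamma> < 1"
    and le: "\<forall>x\<in>X. f x \<le> \<gamma> * (SUP y\<in>X. f y)"
  shows "\<forall>x\<in>X. f x \<le> 0"
proof -
  have ba: "bdd_above (f ` X)" using bdd by (auto simp: bdd_above_def)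
  have "(SUP y\<in>X. f y) \<le> \<gamma> * (SUP y\<in>X. f y)" using le ne by (intro cSUP_least) auto
  then have M: "(SUP y\<in>X. f y) \<le> 0" using g by (smt (verit) mult_le_cancel_right1)
  show ?thesis using cSUP_upper[OF _ ba] M by force
qed


theorem corollary1:
  fixes SM :: "'s measure" and AM :: "'a measure"
    and p :: "'s \<Rightarrow> 'a \<Rightarrow> 's \<Rightarrow> real" and \<gamma> :: real
    and r1 r2 Q1 Q2 QC C :: "'s \<Rightarrow> 'a \<Rightarrow> real"
  assumes gamma: "0 < \<gamma>" "\<gamma> < 1"
    and MA_fin: "0 < emeasure AM (space AM)" "emeasure AM (space AM) < \<infinity>"
    and p: "transition_density SM AM p"
    and r1: "bounded_fun2 r1 (space SM) (space AM)"
            "(\<lambda>(s, a). r1 s a) \<in> borel_measurable (SM \<Otimes>\<^sub>M AM)"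
    and r2: "bounded_fun2 r2 (space SM) (space AM)"
            "(\<lambda>(s, a). r2 s a) \<in> borel_measurable (SM \<Otimes>\<^sub>M AM)"
    and Q1: "optimal_soft_Q SM AM p \<gamma> r1 Q1"
    and Q2: "optimal_soft_Q SM AM p \<gamma> r2 Q2"
    and QC: "optimal_soft_Q SM AM p \<gamma> (\<lambda>s a. (r1 s a + r2 s a) / 2) QC"
    and C_bdd: "bounded_fun2 C (space SM) (space AM)"
    and C_meas: "(\<lambda>s. SUP a\<in>space AM. C s a) \<in> borel_measurable SM"
    and C_fix: "\<forall>s\<in>space SM. \<forall>a\<in>space AM. C s a = C_backup SM AM p \<gamma> Q1 Q2 C s a"
  shows "\<forall>s\<in>space SM.
           soft_V AM (\<lambda>s a. (Q1 s a + Q2 s a) / 2) s \<ge> soft_V AM QC s \<and>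
           soft_V AM QC s \<ge> soft_V AM (\<lambda>s a. (Q1 s a + Q2 s a) / 2) s - (SUP a\<in>space AM. C s a)"
proof (intro ballI)
  fix s0 assume s0: "s0 \<in> space SM"
  define S where "S = space SM"
  define A where "A = space AM"
  define QS where "QS = (\<lambda>s a. (Q1 s a + Q2 s a) / 2)"
  define V1 where "V1 = soft_V AM Q1"
  define V2 where "V2 = soft_V AM Q2"
  define VC where "VC = soft_V AM QC"
  define VS where "VS = soft_V AM QS"
  define D where "D = (\<lambda>x. renyi_half AM (soft_policy AM Q1 x) (soft_policy AM Q2 x))"
  define supC where "supC = (\<lambda>x. SUP a\<in>space AM. C x a)"
  note pos = MA_fin(1) and fin = MA_fin(2)
  have Ane: "A \<noteq> {}" using pos unfolding A_def by auto
  have Sne: "S \<noteq> {}" using s0 unfolding S_def by auto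
  have Q1b: "bounded_fun2 Q1 S A" and Q1m: "(\<lambda>(s, a). Q1 s a) \<in> borel_measurable (SM \<Otimes>\<^sub>M AM)"
    and Q1f: "\<forall>s\<in>S. \<forall>a\<in>A. Q1 s a = r1 s a + \<gamma> * trans_exp SM p s a V1"
    using Q1 unfolding optimal_soft_Q_def soft_backup_def S_def A_def V1_def by auto
  have Q2b: "bounded_fun2 Q2 S A" and Q2m: "(\<lambda>(s, a). Q2 s a) \<in> borel_measurable (SM \<Otimes>\<^sub>M AM)"
    and Q2f: "\<forall>s\<in>S. \<forall>a\<in>A. Q2 s a = r2 s a + \<gamma> * trans_exp SM p s a V2"
    using Q2 unfolding optimal_soft_Q_def soft_backup_def S_def A_def V2_def by auto
  have QCb: "bounded_fun2 QC S A" and QCm: "(\<lambda>(s, a). QC s a) \<in> borel_measurable (SM \<Otimes>\<^sub>M AM)"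
    and QCf: "\<forall>s\<in>S. \<forall>a\<in>A. QC s a = (r1 s a + r2 s a) / 2 + \<gamma> * trans_exp SM p s a VC"
    using QC unfolding optimal_soft_Q_def soft_backup_def S_def A_def VC_def by auto
  obtain B1 where B1: "\<forall>s\<in>S. \<forall>a\<in>A. \<bar>Q1 s a\<bar> \<le> B1" using Q1b unfolding bounded_fun2_def by auto
  obtain B2 where B2: "\<forall>s\<in>S. \<forall>a\<in>A. \<bar>Q2 s a\<bar> \<le> B2" using Q2b unfolding bounded_fun2_def by auto
  obtain BC where BC: "\<forall>s\<in>S. \<forall>a\<in>A. \<bar>QC s a\<bar> \<le> BC" using QCb unfolding bounded_fun2_def by auto
  obtain BK where BK: "\<forall>s\<in>S. \<forall>a\<in>A. \<bar>C s a\<bar> \<le> BK" using C_bdd unfolding bounded_fun2_def S_def A_def by auto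
  have QSb: "bounded_fun2 QS S A" unfolding bounded_fun2_def QS_def
  proof (intro exI[of _ "B1 + B2"] ballI)
    fix s a assume "s \<in> S" "a \<in> A"
    then have "\<bar>Q1 s a\<bar> \<le> B1" "\<bar>Q2 s a\<bar> \<le> B2" using B1 B2 by auto
    then show "\<bar>(Q1 s a + Q2 s a) / 2\<bar> \<le> B1 + B2" by (auto simp: abs_le_iff)
  qed
  obtain BS where BS: "\<forall>s\<in>S. \<forall>a\<in>A. \<bar>QS s a\<bar> \<le> BS" using QSb unfolding bounded_fun2_def by auto
  have "(\<lambda>(s, a). QS s a) = (\<lambda>z. ((\<lambda>(s, a). Q1 s a) z + (\<lambda>(s, a). Q2 s a) z) / 2)"
    unfolding QS_def by auto
  then have QSm: "(\<lambda>(s, a). QS s a) \<in> borel_measurable (SM \<Otimes>\<^sub>M AM)"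
    using Q1m Q2m by simp
  note Q1b' = Q1b[unfolded S_def A_def] and Q2b' = Q2b[unfolded S_def A_def]
    and QCb' = QCb[unfolded S_def A_def] and QSb' = QSb[unfolded S_def A_def]
  have bV: "bmf SM (soft_V AM Q)" if "(\<lambda>(s, a). Q s a) \<in> borel_measurable (SM \<Otimes>\<^sub>M AM)"
    "bounded_fun2 Q (space SM) (space AM)" for Q
    unfolding bmf_def using V_meas[OF fin that(1)] V_bounded[OF pos fin that] by auto
  have bV1: "bmf SM V1" unfolding V1_def by (rule bV[OF Q1m Q1b'])
  have bV2: "bmf SM V2" unfolding V2_def by (rule bV[OF Q2m Q2b'])
  have bVC: "bmf SM VC" unfolding VC_def by (rule bV[OF QCm QCb'])
  have bVS: "bmf SM VS" unfolding VS_def by (rule bV[OF QSm QSb'])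
  have Did: "D x = V1 x + V2 x - 2 * VS x" and D0: "0 \<le> D x" if x: "x \<in> S" for x
  proof -
    have x': "x \<in> space SM" using x S_def by simp
    have iS: "integrable AM (\<lambda>a. exp ((Q1 x a + Q2 x a) / 2))"
      using Z_int[OF fin QSm QSb' x'] unfolding QS_def .
    have zS: "0 < (\<integral>a. exp ((Q1 x a + Q2 x a) / 2) \<partial>AM)"
      using Z_pos[OF pos fin QSm QSb' x'] unfolding QS_def .
    note R = renyi_id[where ?Q1.0=Q1 and ?Q2.0=Q2 and s=x and AM=AM, OF Z_int[OF fin Q1m Q1b' x'] Z_int[OF fin Q2m Q2b' x'] iS
        Z_pos[OF pos fin Q1m Q1b' x'] Z_pos[OF pos fin Q2m Q2b' x'] zS]
    show "D x = V1 x + V2 x - 2 * VS x" using R(1) unfolding D_def V1_def V2_def VS_def QS_def .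
    show "0 \<le> D x" using R(2) unfolding D_def .
  qed
  have bD: "bmf SM D"
  proof (rule bmf_cong)
    show "bmf SM (\<lambda>x. V1 x + V2 x + (-2) * VS x)"
      by (intro bmf_add bmf_cmult bV1 bV2 bVS)
    show "\<forall>x\<in>space SM. V1 x + V2 x + - 2 * VS x = D x" using Did unfolding S_def by auto
  qed
  have Cle: "C x a \<le> supC x" if "x \<in> S" "a \<in> A" for x a
    unfolding supC_def using that BK unfolding S_def A_def
    by (intro cSUP_upper) (auto simp: bdd_above_def abs_le_iff)
  have bsupC: "bmf SM supC" unfolding bmf_def
  proof (intro conjI exI ballI)
    show "supC \<in> borel_measurable SM" using C_meas unfolding supC_def .
    fix x assume x: "x \<in> space SM"
    obtain a where a: "a \<in> A" using Ane by auto
    have "supC x \<le> BK" unfolding supC_def using Ane BK x unfolding S_def A_def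
      by (intro cSUP_least) (auto simp: abs_le_iff)
    moreover have "-BK \<le> supC x" using Cle[of x a] BK x a unfolding S_def
      by (force simp: abs_le_iff)
    ultimately show "\<bar>supC x\<bar> \<le> BK" by auto
  qed
  have Cf: "\<forall>s\<in>S. \<forall>a\<in>A. C s a = \<gamma> * trans_exp SM p s a (\<lambda>x. D x + supC x)"
    using C_fix unfolding C_backup_def D_def supC_def S_def A_def by auto
  have pS: "\<And>s a. s \<in> S \<Longrightarrow> a \<in> A \<Longrightarrow> s \<in> space SM \<and> a \<in> space AM" unfolding S_def A_def by auto
  have avg: "bmf SM (\<lambda>x. (1/2) * V1 x + (1/2) * V2 x)" by (intro bmf_add bmf_cmult bV1 bV2)
  have QSf: "QS s a = (r1 s a + r2 s a) / 2 + \<gamma> * trans_exp SM p s a (\<lambda>x. (1/2) * V1 x + (1/2) * V2 x)"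
    if "s \<in> S" "a \<in> A" for s a
  proof -
    have "trans_exp SM p s a (\<lambda>x. (1/2) * V1 x + (1/2) * V2 x)
        = (1/2) * trans_exp SM p s a V1 + (1/2) * trans_exp SM p s a V2"
      using pS[OF that] E_add[OF p _ _ bmf_cmult[OF bV1] bmf_cmult[OF bV2], of s a "1/2" "1/2"]
      by (simp only: E_cmult)
    then show ?thesis using Q1f Q2f that unfolding QS_def by (simp add: field_simps)
  qed
  have VSle: "VS x \<le> (1/2) * V1 x + (1/2) * V2 x" if "x \<in> space SM" for x
    using Did[of x] D0[of x] that unfolding S_def by simp
  have P1: "\<forall>z\<in>S \<times> A. (\<lambda>(s, a). QC s a - QS s a) z \<le> 0"
  proof (rule contraction)
    show "S \<times> A \<noteq> {}" using Sne Ane by auto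
    have bd1: "\<forall>z\<in>S \<times> A. (\<lambda>(s, a). QC s a - QS s a) z \<le> BC + BS"
    proof clarify
      fix s a assume "s \<in> S" "a \<in> A"
      then have "\<bar>QC s a\<bar> \<le> BC" "\<bar>QS s a\<bar> \<le> BS" using BC BS by auto
      then show "QC s a - QS s a \<le> BC + BS" by (auto simp: abs_le_iff)
    qed
    then show "\<exists>B. \<forall>z\<in>S \<times> A. (\<lambda>(s, a). QC s a - QS s a) z \<le> B" by blast
    show "\<gamma> < 1" by (rule gamma(2))
    define M where "M = (SUP y\<in>S \<times> A. (\<lambda>(s, a). QC s a - QS s a) y)"
    have ba: "bdd_above ((\<lambda>(s, a). QC s a - QS s a) ` (S \<times> A))"
      using bd1 unfolding bdd_above_def by blast
    have Mup: "QC x a - QS x a \<le> M" if "x \<in> S" "a \<in> A" for x a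
      unfolding M_def using cSUP_upper[OF _ ba, of "(x, a)"] that by auto
    have VCle: "VC x \<le> VS x + M" if x: "x \<in> space SM" for x
      unfolding VC_def VS_def
      by (rule V_shift[OF pos fin QSm QSb' QCm QCb' x]) (use Mup x in \<open>fastforce simp: S_def A_def\<close>)
    show "\<forall>z\<in>S \<times> A. (\<lambda>(s, a). QC s a - QS s a) z \<le> \<gamma> * M"
    proof (clarify)
      fix s a assume sa: "s \<in> S" "a \<in> A"
      note sa' = pS[OF sa]
      have e1: "trans_exp SM p s a VC \<le> trans_exp SM p s a VS + M"
      proof -
        have "trans_exp SM p s a VC \<le> trans_exp SM p s a (\<lambda>x. VS x + M)"
          using sa' VCle by (intro E_mono[OF p] bmf_add bVC bVS bmf_const) auto
        also have "\<dots> = trans_exp SM p s a VS + M"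
          using sa' by (simp add: E_add[OF p _ _ bVS bmf_const] E_const[OF p])
        finally show ?thesis .
      qed
      have e2: "trans_exp SM p s a VS \<le> trans_exp SM p s a (\<lambda>x. (1/2) * V1 x + (1/2) * V2 x)"
        using sa' VSle by (intro E_mono[OF p _ _ bVS avg]) auto
      have "QC s a - QS s a = \<gamma> * (trans_exp SM p s a VC - trans_exp SM p s a (\<lambda>x. (1/2) * V1 x + (1/2) * V2 x))"
        using QCf QSf[OF sa] sa by (simp add: algebra_simps)
      also have "\<dots> \<le> \<gamma> * M" using e1 e2 gamma(1) by (intro mult_left_mono) auto
      finally show "QC s a - QS s a \<le> \<gamma> * M" .
    qed
  qed
  have P2: "\<forall>z\<in>S \<times> A. (\<lambda>(s, a). QS s a - QC s a - C s a) z \<le> 0"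
  proof (rule contraction)
    show "S \<times> A \<noteq> {}" using Sne Ane by auto
    have bd2: "\<forall>z\<in>S \<times> A. (\<lambda>(s, a). QS s a - QC s a - C s a) z \<le> BS + BC + BK"
    proof clarify
      fix s a assume "s \<in> S" "a \<in> A"
      then have "\<bar>QC s a\<bar> \<le> BC" "\<bar>QS s a\<bar> \<le> BS" "\<bar>C s a\<bar> \<le> BK" using BC BS BK by auto
      then show "QS s a - QC s a - C s a \<le> BS + BC + BK" by (auto simp: abs_le_iff)
    qed
    then show "\<exists>B. \<forall>z\<in>S \<times> A. (\<lambda>(s, a). QS s a - QC s a - C s a) z \<le> B" by blast
    show "\<gamma> < 1" by (rule gamma(2))
    define N where "N = (SUP y\<in>S \<times> A. (\<lambda>(s, a). QS s a - QC s a - C s a) y)"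
    have ba: "bdd_above ((\<lambda>(s, a). QS s a - QC s a - C s a) ` (S \<times> A))"
      using bd2 unfolding bdd_above_def by blast
    have Nup: "QS x a - QC x a - C x a \<le> N" if "x \<in> S" "a \<in> A" for x a
      unfolding N_def using cSUP_upper[OF _ ba, of "(x, a)"] that by auto
    have VSle2: "VS x \<le> VC x + (N + supC x)" if x: "x \<in> space SM" for x
      unfolding VC_def VS_def
    proof (rule V_shift[OF pos fin QCm QCb' QSm QSb' x], intro ballI)
      fix a assume a: "a \<in> space AM"
      have "x \<in> S" "a \<in> A" using x a by (auto simp: S_def A_def)
      with Nup Cle show "QS x a \<le> QC x a + (N + supC x)" by force
    qed
    have bR: "bmf SM (\<lambda>x. (VC x + N) + (D x + supC x))"
      by (intro bmf_add bVC bmf_const bD bsupC)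
    show "\<forall>z\<in>S \<times> A. (\<lambda>(s, a). QS s a - QC s a - C s a) z \<le> \<gamma> * N"
    proof (clarify)
      fix s a assume sa: "s \<in> S" "a \<in> A"
      note sa' = pS[OF sa]
      have "trans_exp SM p s a (\<lambda>x. (1/2) * V1 x + (1/2) * V2 x)
          \<le> trans_exp SM p s a (\<lambda>x. (VC x + N) + (D x + supC x))"
      proof (intro E_mono[OF p _ _ avg bR] ballI)
        fix x assume x: "x \<in> space SM"
        have "x \<in> S" using x S_def by simp
        then show "(1/2) * V1 x + (1/2) * V2 x \<le> (VC x + N) + (D x + supC x)"
          using Did[of x] D0[of x] VSle2[OF x] by simp
      qed (use sa' in auto)
      also have "\<dots> = trans_exp SM p s a VC + N + trans_exp SM p s a (\<lambda>x. D x + supC x)"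
        using sa' by (simp add: E_add[OF p _ _ bmf_add[OF bVC bmf_const] bmf_add[OF bD bsupC]]
            E_add[OF p _ _ bVC bmf_const] E_const[OF p])
      finally have e: "trans_exp SM p s a (\<lambda>x. (1/2) * V1 x + (1/2) * V2 x)
          \<le> trans_exp SM p s a VC + N + trans_exp SM p s a (\<lambda>x. D x + supC x)" .
      have "QS s a - QC s a - C s a = \<gamma> * (trans_exp SM p s a (\<lambda>x. (1/2) * V1 x + (1/2) * V2 x)
          - trans_exp SM p s a VC - trans_exp SM p s a (\<lambda>x. D x + supC x))"
        using QCf Cf QSf[OF sa] sa by (simp add: algebra_simps)
      also have "\<dots> \<le> \<gamma> * N" using e gamma(1) by (intro mult_left_mono) auto
      finally show "QS s a - QC s a - C s a \<le> \<gamma> * N" .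
    qed
  qed
  have s0S: "s0 \<in> S" using s0 S_def by simp
  have "VC s0 \<le> VS s0 + 0" unfolding VC_def VS_def
    by (rule V_shift[OF pos fin QSm QSb' QCm QCb' s0]) (use P1 s0S in \<open>auto simp: A_def\<close>)
  moreover have "VS s0 \<le> VC s0 + supC s0" unfolding VC_def VS_def
  proof (rule V_shift[OF pos fin QCm QCb' QSm QSb' s0], intro ballI)
    fix a assume a: "a \<in> space AM"
    then have "a \<in> A" by (simp add: A_def)
    with P2 s0S Cle[OF s0S this] show "QS s0 a \<le> QC s0 a + supC s0" by force
  qed
  ultimately show "soft_V AM (\<lambda>s a. (Q1 s a + Q2 s a) / 2) s0 \<ge> soft_V AM QC s0 \<and>
           soft_V AM QC s0 \<ge> soft_V AM (\<lambda>s a. (Q1 s a + Q2 s a) / 2) s0 - (SUP a\<in>space AM. C s0 a)"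
    unfolding VC_def VS_def QS_def supC_def by simp
qed

end
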